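(* In the setting described in the context, suppose that for all $t=1,\dots,n$ and $j=1,\dots,m+1$ $$\mathsf E[\mathbf 1_{t,j}]=\frac{\mathsf E\big[G\,\mathbf 1_{\{G\in[\alpha_{j-1},\alpha_j)\}}\big]}{g(\alpha_j)-g(\alpha_{j-1})}\qquad(\ast)$$ and that the random vectors $(\mathbf 1_{t,j})_{j=1,\dots,m+1}$, $t=1,\dots,n$, are independent. Let $X_t=\sum_{j=1}^{m+1}\mathbf 1_{t,j}$ (the number of breached levels). Then for every $t$, $$\mathsf P(X_t\le k)=1-\frac{\mathsf E\big[G\,\mathbf 1_{\{G\in[\alpha_{m-k},\alpha_{m-k+1})\}}\big]}{g(\alpha_{m-k+1})-g(\alpha_{m-k})},\quad 0\le k\le m,\qquad \mathsf P(X_t\le m+1)=1,$$ and the random variables $X_1,\dots,X_n$ are independent.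
   Context: Let $n\ge1$ and let $L=(L_t)_{t=1}^n$ and $M=(M_t)_{t=1}^n$ be real-valued stochastic processes on a probability space $(\Omega,\mathcal F,\mathsf P)$. Assume that for each $t$ the conditional distribution function $F_{M_t\mid M_{t-1},\dots,M_1}(x\mid y_{t-1},\dots,y_1)$ is continuous in $x$. Define $q^{t-1}_{M_t}(u)=\inf\{x: F_{M_t\mid M_{t-1},\dots,M_1}(x\mid L_{t-1},\dots,L_1)\ge u\}$. A distortion function is a non-decreasing $g:[0,1]\to[0,1]$ with $g(0)=0$, $g(1)=1$. Let $g$ be a left-continuous distortion function and let $G$ be a $[0,1]$-valued random variable, independent of $L$ and $M$, with $\mathsf P(G<u)=g(u)$ for all $u\in[0,1]$. Let $0=\alpha_0<\alpha_1<\dots<\alpha_m<\alpha_{m+1}=1$ with $g(\alpha_j)-g(\alpha_{j-1})\neq0$ for all $j$. Let $(G_{t,j})_{t\le n,\,j\le m+1}$ be independent random variables, independent of $(L,M)$, with $G_{t,j}$ distributed as $G$ conditional on $G\in[\alpha_{j-1},\alpha_j)$. Set $\mathbf 1_{t,j}=1$ if $L_t>q^{t-1}_{M_t}(1-G_{t,j})$ and $\mathbf 1_{t,j}=0$ otherwise. *)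

theory Defs
  imports "HOL-Probability.Probability"
begin

text \<open>Generalised inverse (quantile) of a distribution function, with values in the
extended reals so that the infimum of the empty set is \<open>+\<infinity>\<close>:
  quant F u = inf { x. F x \<ge> u }.\<close>
definition quant :: "(real \<Rightarrow> real) \<Rightarrow> real \<Rightarrow> ereal" where
  "quant F u = Inf (ereal ` {x. u \<le> F x})"

text \<open>Conditional distribution function of M_t given the past, evaluated along the path
of L: F t y x stands for F_{M_t | M_{t-1},...,M_1}(x | y_{t-1},...,y_1).\<close>
definition breach ::
  "(nat \<Rightarrow> (nat \<Rightarrow> real) \<Rightarrow> real \<Rightarrow> real) \<Rightarrow> (nat \<Rightarrow> 'a \<Rightarrow> real) \<Rightarrow>
   (nat \<Rightarrow> nat \<Rightarrow> 'a \<Rightarrow> real) \<Rightarrow> nat \<Rightarrow> nat \<Rightarrow> 'a \<Rightarrow> real" where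
  "breach F L Gtj t j \<omega> =
     (if quant (F t (\<lambda>i. L i \<omega>)) (1 - Gtj t j \<omega>) < ereal (L t \<omega>) then 1 else 0)"

definition nbreach ::
  "(nat \<Rightarrow> (nat \<Rightarrow> real) \<Rightarrow> real \<Rightarrow> real) \<Rightarrow> (nat \<Rightarrow> 'a \<Rightarrow> real) \<Rightarrow>
   (nat \<Rightarrow> nat \<Rightarrow> 'a \<Rightarrow> real) \<Rightarrow> nat \<Rightarrow> nat \<Rightarrow> 'a \<Rightarrow> real" where
  "nbreach F L Gtj m t \<omega> = (\<Sum>j=1..m+1. breach F L Gtj t j \<omega>)"

text \<open>Independence of two random elements with possibly different codomains (the
library constant indep_var requires equal codomain types); this is exactly the right-hand
side of the library characterisation prob_space.indep_var_eq.\<close>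
definition indep_rv :: "'a measure \<Rightarrow> 'b measure \<Rightarrow> ('a \<Rightarrow> 'b) \<Rightarrow> 'c measure \<Rightarrow> ('a \<Rightarrow> 'c) \<Rightarrow> bool" where
  "indep_rv P S X T Y \<longleftrightarrow>
     X \<in> measurable P S \<and> Y \<in> measurable P T \<and>
     prob_space.indep_set P
       (sigma_sets (space P) { X -` A \<inter> space P | A. A \<in> sets S})
       (sigma_sets (space P) { Y -` A \<inter> space P | A. A \<in> sets T})"

end

theory Submission
  imports Defs
begin

lemma quant_mono_aux: "u \<le> v \<Longrightarrow> quant F u \<le> quant F v"
  unfolding quant_def by (intro Inf_superset_mono) auto

theorem lemma3p2:
  fixes P :: "'a measure"
    and n m :: nat
    and L M :: "nat \<Rightarrow> 'a \<Rightarrow> real"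
    and F :: "nat \<Rightarrow> (nat \<Rightarrow> real) \<Rightarrow> real \<Rightarrow> real"
    and g :: "real \<Rightarrow> real"
    and G :: "'a \<Rightarrow> real"
    and Gtj :: "nat \<Rightarrow> nat \<Rightarrow> 'a \<Rightarrow> real"
    and \<alpha> :: "nat \<Rightarrow> real"
  assumes P: "prob_space P"
    and n: "n \<ge> 1"
    and L_rv: "\<And>t. t \<in> {1..n} \<Longrightarrow> L t \<in> borel_measurable P"
    and M_rv: "\<And>t. t \<in> {1..n} \<Longrightarrow> M t \<in> borel_measurable P"
    \<comment> \<open>F t is a (regular version of the) conditional distribution function of M_t given
        M_{t-1},...,M_1: it depends only on y_1..y_{t-1}, is a continuous distribution
        function in x, and satisfies the defining property of conditional distributions\<close>
    and F_past: "\<And>t y y' x. t \<in> {1..n} \<Longrightarrow> (\<forall>i\<in>{1..<t}. y i = y' i) \<Longrightarrow> F t y x = F t y' x"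
    and F_mono: "\<And>t y. t \<in> {1..n} \<Longrightarrow> mono (F t y)"
    and F_cont: "\<And>t y. t \<in> {1..n} \<Longrightarrow> continuous_on UNIV (F t y)"
    and F_bot: "\<And>t y. t \<in> {1..n} \<Longrightarrow> (F t y \<longlongrightarrow> 0) at_bot"
    and F_top: "\<And>t y. t \<in> {1..n} \<Longrightarrow> (F t y \<longlongrightarrow> 1) at_top"
    and F_meas: "\<And>t x. t \<in> {1..n} \<Longrightarrow> (\<lambda>\<omega>. F t (\<lambda>i. M i \<omega>) x) \<in> borel_measurable P"
    and F_cond: "\<And>t x B. t \<in> {1..n} \<Longrightarrow> B \<in> sets (PiM {1..<t} (\<lambda>_. borel)) \<Longrightarrow>
        measure P {\<omega> \<in> space P. M t \<omega> \<le> x \<and> restrict (\<lambda>i. M i \<omega>) {1..<t} \<in> B}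
        = integral\<^sup>L P (\<lambda>\<omega>. indicator B (restrict (\<lambda>i. M i \<omega>) {1..<t}) * F t (\<lambda>i. M i \<omega>) x)"
    \<comment> \<open>left-continuous distortion function g\<close>
    and g_mono: "mono_on {0..1} g"
    and g_range: "g ` {0..1} \<subseteq> {0..1}"
    and g0: "g 0 = 0" and g1: "g 1 = 1"
    and g_lcont: "\<And>u. u \<in> {0<..1} \<Longrightarrow> (g \<longlongrightarrow> g u) (at_left u)"
    \<comment> \<open>G with P(G < u) = g(u), independent of (L, M)\<close>
    and G_rv: "G \<in> borel_measurable P"
    and G_range: "\<And>\<omega>. \<omega> \<in> space P \<Longrightarrow> G \<omega> \<in> {0..1}"
    and G_dist: "\<And>u. u \<in> {0..1} \<Longrightarrow> measure P {\<omega> \<in> space P. G \<omega> < u} = g u"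
    and G_indep: "indep_rv P borel G
        (PiM {1..n} (\<lambda>_. borel \<Otimes>\<^sub>M borel)) (\<lambda>\<omega>. restrict (\<lambda>t. (L t \<omega>, M t \<omega>)) {1..n})"
    \<comment> \<open>levels 0 = alpha_0 < ... < alpha_{m+1} = 1\<close>
    and \<alpha>0: "\<alpha> 0 = 0" and \<alpha>1: "\<alpha> (m + 1) = 1"
    and \<alpha>_strict: "\<And>j. j \<le> m \<Longrightarrow> \<alpha> j < \<alpha> (Suc j)"
    and g_\<alpha>: "\<And>j. j \<in> {1..m+1} \<Longrightarrow> g (\<alpha> j) - g (\<alpha> (j - 1)) \<noteq> 0"
    \<comment> \<open>the G_{t,j}: G_{t,j} ~ G conditional on G \<in> [alpha_{j-1}, alpha_j),
        mutually independent and independent of (L, M)\<close>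
    and Gtj_rv: "\<And>t j. t \<in> {1..n} \<Longrightarrow> j \<in> {1..m+1} \<Longrightarrow> Gtj t j \<in> borel_measurable P"
    and Gtj_dist: "\<And>t j A. t \<in> {1..n} \<Longrightarrow> j \<in> {1..m+1} \<Longrightarrow> A \<in> sets borel \<Longrightarrow>
        measure P (Gtj t j -` A \<inter> space P)
        = measure P (G -` (A \<inter> {\<alpha> (j - 1)..<\<alpha> j}) \<inter> space P) / (g (\<alpha> j) - g (\<alpha> (j - 1)))"
    and Gtj_indep: "prob_space.indep_vars P (\<lambda>_. borel) (\<lambda>(t, j). Gtj t j) ({1..n} \<times> {1..m+1})"
    and Gtj_indep_LM: "indep_rv P
        (PiM ({1..n} \<times> {1..m+1}) (\<lambda>_. borel)) (\<lambda>\<omega>. restrict (\<lambda>(t, j). Gtj t j \<omega>) ({1..n} \<times> {1..m+1}))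
        (PiM {1..n} (\<lambda>_. borel \<Otimes>\<^sub>M borel)) (\<lambda>\<omega>. restrict (\<lambda>t. (L t \<omega>, M t \<omega>)) {1..n})"
    \<comment> \<open>hypothesis (*)\<close>
    and star: "\<And>t j. t \<in> {1..n} \<Longrightarrow> j \<in> {1..m+1} \<Longrightarrow>
        integral\<^sup>L P (breach F L Gtj t j)
        = integral\<^sup>L P (\<lambda>\<omega>. G \<omega> * indicator {\<alpha> (j - 1)..<\<alpha> j} (G \<omega>)) / (g (\<alpha> j) - g (\<alpha> (j - 1)))"
    \<comment> \<open>the vectors (1_{t,j})_j, t = 1..n, are independent\<close>
    and rows_indep: "prob_space.indep_vars P (\<lambda>_. PiM {1..m+1} (\<lambda>_. borel))
        (\<lambda>t \<omega>. restrict (\<lambda>j. breach F L Gtj t j \<omega>) {1..m+1}) {1..n}"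
  shows "(\<forall>t \<in> {1..n}.
            (\<forall>k \<le> m. measure P {\<omega> \<in> space P. nbreach F L Gtj m t \<omega> \<le> real k}
               = 1 - integral\<^sup>L P (\<lambda>\<omega>. G \<omega> * indicator {\<alpha> (m - k)..<\<alpha> (m - k + 1)} (G \<omega>))
                     / (g (\<alpha> (m - k + 1)) - g (\<alpha> (m - k))))
          \<and> measure P {\<omega> \<in> space P. nbreach F L Gtj m t \<omega> \<le> real (m + 1)} = 1)
       \<and> prob_space.indep_vars P (\<lambda>_. borel) (nbreach F L Gtj m) {1..n}"
proof -
  interpret prob_space P by (rule P)
  define row where "row t \<omega> = restrict (\<lambda>j. breach F L Gtj t j \<omega>) {1..m+1}" for t \<omega>
  have row_meas: "row t \<in> measurable P (PiM {1..m+1} (\<lambda>_. borel))" if "t \<in> {1..n}" for t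
    using rows_indep that unfolding indep_vars_def row_def by auto
  have B_meas: "breach F L Gtj t j \<in> borel_measurable P" if "t \<in> {1..n}" "j \<in> {1..m+1}" for t j
  proof -
    have "(\<lambda>\<omega>. row t \<omega> j) \<in> borel_measurable P"
      using measurable_comp[OF row_meas[OF that(1)] measurable_component_singleton[OF that(2)]]
      by (simp add: comp_def)
    moreover have "(\<lambda>\<omega>. row t \<omega> j) = breach F L Gtj t j" using that by (auto simp: row_def)
    ultimately show ?thesis by simp
  qed
  have B01: "breach F L Gtj t j \<omega> = 0 \<or> breach F L Gtj t j \<omega> = 1" for t j \<omega>
    by (simp add: breach_def)
  have indep: "indep_vars (\<lambda>_. borel) (nbreach F L Gtj m) {1..n}"
  proof -
    have "indep_vars (\<lambda>_. borel) (\<lambda>t \<omega>. (\<lambda>v. \<Sum>j=1..m+1. v j) (row t \<omega>)) {1..n}"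
    proof (rule indep_vars_compose2[where M'="\<lambda>_. PiM {1..m+1} (\<lambda>_. borel)" and X=row and Y="\<lambda>_ v. \<Sum>j=1..m+1. v j"])
      show "indep_vars (\<lambda>_. Pi\<^sub>M {1..m + 1} (\<lambda>_. borel)) row {1..n}"
      proof -
        have "row = (\<lambda>t \<omega>. restrict (\<lambda>j. breach F L Gtj t j \<omega>) {1..m+1})"
          by (intro ext) (simp add: row_def)
        then show ?thesis using rows_indep by simp
      qed
      show "(\<lambda>v::nat\<Rightarrow>real. \<Sum>j = 1..m + 1. v j) \<in> borel_measurable (Pi\<^sub>M {1..m + 1} (\<lambda>_. borel))" for i
        by measurable
    qed
    moreover have "(\<lambda>t \<omega>. (\<lambda>v. \<Sum>j=1..m+1. v j) (row t \<omega>)) = nbreach F L Gtj m"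
      by (intro ext) (simp add: row_def nbreach_def)
    ultimately show ?thesis by simp
  qed
  have amono: "\<alpha> i \<le> \<alpha> j" if "i \<le> j" "j \<le> m+1" for i j
    using that
  proof (induction j)
    case 0 thus ?case by simp
  next
    case (Suc j)
    show ?case
    proof (cases "i = Suc j")
      case True thus ?thesis by simp
    next
      case False
      then have "i \<le> j" using Suc by simp
      then have "\<alpha> i \<le> \<alpha> j" using Suc by simp
      also have "\<dots> < \<alpha> (Suc j)" using \<alpha>_strict Suc by simp
      finally show ?thesis by simp
    qed
  qed
  have arange: "\<alpha> j \<in> {0..1}" if "j \<le> m+1" for j
    using amono[of 0 j] amono[of j "m+1"] that \<alpha>0 \<alpha>1 by simp
  note G_rv[measurable]
  have Gint: "measure P (G -` {\<alpha> (j-1)..<\<alpha> j} \<inter> space P) = g (\<alpha> j) - g (\<alpha> (j - 1))"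
    if "j \<in> {1..m+1}" for j
  proof -
    have eq: "{\<omega>\<in>space P. G \<omega> < \<alpha> j} = {\<omega>\<in>space P. G \<omega> < \<alpha> (j-1)} \<union> (G -` {\<alpha> (j-1)..<\<alpha> j} \<inter> space P)"
      using amono[of "j-1" j] that by auto
    have "measure P {\<omega>\<in>space P. G \<omega> < \<alpha> j} = measure P {\<omega>\<in>space P. G \<omega> < \<alpha> (j-1)} + measure P (G -` {\<alpha> (j-1)..<\<alpha> j} \<inter> space P)"
      unfolding eq by (rule finite_measure_Union) auto
    moreover have "measure P {\<omega>\<in>space P. G \<omega> < \<alpha> j} = g (\<alpha> j)"
      using G_dist arange that by simp
    moreover have "measure P {\<omega>\<in>space P. G \<omega> < \<alpha> (j-1)} = g (\<alpha> (j-1))"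
    proof -
      have "\<alpha> (j-1) \<in> {0..1}" by (rule arange) (use that in force)
      then show ?thesis using G_dist by blast
    qed
    ultimately show ?thesis by simp
  qed
  have AEj: "AE \<omega> in P. Gtj t j \<omega> \<in> {\<alpha> (j-1)..<\<alpha> j}" if "t \<in> {1..n}" "j \<in> {1..m+1}" for t j
  proof -
    have "prob (Gtj t j -` {\<alpha> (j-1)..<\<alpha> j} \<inter> space P) = 1"
      using Gtj_dist[OF that, of "{\<alpha> (j-1)..<\<alpha> j}"] Gint[OF that(2)] g_\<alpha>[OF that(2)] by simp
    from AE_prob_1[OF this] show ?thesis by eventually_elim auto
  qed
  have part1: "(\<forall>k \<le> m. measure P {\<omega> \<in> space P. nbreach F L Gtj m t \<omega> \<le> real k}
               = 1 - integral\<^sup>L P (\<lambda>\<omega>. G \<omega> * indicator {\<alpha> (m - k)..<\<alpha> (m - k + 1)} (G \<omega>))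
                     / (g (\<alpha> (m - k + 1)) - g (\<alpha> (m - k))))
          \<and> measure P {\<omega> \<in> space P. nbreach F L Gtj m t \<omega> \<le> real (m + 1)} = 1"
    if t: "t \<in> {1..n}" for t
  proof -
    let ?B = "breach F L Gtj t"
    have Bm[measurable]: "?B j \<in> borel_measurable P" if "j \<in> {1..m+1}" for j
      using B_meas t that by simp
    have Xm[measurable]: "nbreach F L Gtj m t \<in> borel_measurable P"
      unfolding nbreach_def[abs_def] by (intro borel_measurable_sum) (use Bm in auto)
    have AEall: "AE \<omega> in P. \<forall>j\<in>{1..m+1}. Gtj t j \<omega> \<in> {\<alpha> (j-1)..<\<alpha> j}"
      by (rule AE_finite_allI) (use AEj t in auto)
    have nest: "AE \<omega> in P. \<forall>i\<in>{1..m+1}. \<forall>j\<in>{1..m+1}. i \<le> j \<longrightarrow> ?B i \<omega> \<le> ?B j \<omega>"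
      using AEall
    proof eventually_elim
      case (elim \<omega>)
      show ?case
      proof (intro ballI impI)
        fix i j assume i: "i \<in> {1..m+1}" and j: "j \<in> {1..m+1}" and ij: "i \<le> j"
        have "Gtj t i \<omega> \<le> Gtj t j \<omega>"
        proof (cases "i = j")
          case False
          then have "Gtj t i \<omega> < \<alpha> i" using elim i by auto
          also have "\<alpha> i \<le> \<alpha> (j-1)" using amono[of i "j-1"] False ij j by simp
          also have "\<alpha> (j-1) \<le> Gtj t j \<omega>" using elim j by auto
          finally show ?thesis by simp
        qed simp
        then have "quant (F t (\<lambda>i. L i \<omega>)) (1 - Gtj t j \<omega>) \<le> quant (F t (\<lambda>i. L i \<omega>)) (1 - Gtj t i \<omega>)"
          by (intro quant_mono_aux) simp
        then show "?B i \<omega> \<le> ?B j \<omega>"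
          unfolding breach_def using le_less_trans by (auto split: if_splits)
      qed
    qed
    have Bnn: "0 \<le> ?B j \<omega>" "?B j \<omega> \<le> 1" for j \<omega> using B01[of t j \<omega>] by auto
    have part_a: "measure P {\<omega> \<in> space P. nbreach F L Gtj m t \<omega> \<le> real k}
               = 1 - integral\<^sup>L P (\<lambda>\<omega>. G \<omega> * indicator {\<alpha> (m - k)..<\<alpha> (m - k + 1)} (G \<omega>))
                     / (g (\<alpha> (m - k + 1)) - g (\<alpha> (m - k)))" if k: "k \<le> m" for k
    proof -
      define j0 where "j0 = m - k + 1"
      have j0: "j0 \<in> {1..m+1}" "j0 - 1 = m - k" using k by (auto simp: j0_def)
      have AEiff: "AE \<omega> in P. (nbreach F L Gtj m t \<omega> \<le> real k) \<longleftrightarrow> ?B j0 \<omega> = 0"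
        using nest
      proof eventually_elim
        case (elim \<omega>)
        let ?f = "\<lambda>j. ?B j \<omega>"
        show ?case
        proof (cases "?B j0 \<omega> = 0")
          case True
          have split: "{1..m+1} = {1..j0} \<union> {Suc j0..m+1}" using j0 by auto
          have "nbreach F L Gtj m t \<omega> = sum ?f {1..j0} + sum ?f {Suc j0..m+1}"
            unfolding nbreach_def by (subst split, rule sum.union_disjoint) auto
          moreover have "sum ?f {1..j0} = 0"
          proof (rule sum.neutral, rule ballI)
            fix j assume "j \<in> {1..j0}"
            then have "?B j \<omega> \<le> ?B j0 \<omega>" using elim j0 by auto
            then show "?B j \<omega> = 0" using True Bnn[of j \<omega>] by simp
          qed
          moreover have "sum ?f {Suc j0..m+1} \<le> of_nat (card {Suc j0..m+1}) * 1"
            by (rule sum_bounded_above) (use Bnn in auto)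
          moreover have "card {Suc j0..m+1} = k" using k by (simp add: j0_def)
          ultimately show ?thesis using True by simp
        next
          case False
          then have B1: "?B j0 \<omega> = 1" using B01 by blast
          have split: "{1..m+1} = {1..<j0} \<union> {j0..m+1}" using j0 by auto
          have "nbreach F L Gtj m t \<omega> = sum ?f {1..<j0} + sum ?f {j0..m+1}"
            unfolding nbreach_def by (subst split, rule sum.union_disjoint) auto
          moreover have "0 \<le> sum ?f {1..<j0}" by (rule sum_nonneg) (use Bnn in auto)
          moreover have "sum ?f {j0..m+1} = sum (\<lambda>_. 1) {j0..m+1}"
          proof (rule sum.cong[OF refl])
            fix j assume "j \<in> {j0..m+1}"
            then have "?B j0 \<omega> \<le> ?B j \<omega>" using elim j0 by auto
            then show "?B j \<omega> = 1" using B1 Bnn[of j \<omega>] by simp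
          qed
          moreover have "card {j0..m+1} = k + 1" using k by (simp add: j0_def)
          ultimately show ?thesis using False by simp
        qed
      qed
      have "measure P {\<omega> \<in> space P. nbreach F L Gtj m t \<omega> \<le> real k} = measure P {\<omega> \<in> space P. ?B j0 \<omega> = 0}"
        by (rule measure_eq_AE) (use AEiff j0 in auto)
      also have "{\<omega> \<in> space P. ?B j0 \<omega> = 0} = space P - {\<omega> \<in> space P. ?B j0 \<omega> = 1}"
        using B01 by auto
      also have "measure P \<dots> = 1 - measure P {\<omega> \<in> space P. ?B j0 \<omega> = 1}"
        by (rule prob_compl) (use j0 in auto)
      also have "measure P {\<omega> \<in> space P. ?B j0 \<omega> = 1} = integral\<^sup>L P (?B j0)"
      proof -
        have "integral\<^sup>L P (?B j0) = integral\<^sup>L P (indicator {\<omega> \<in> space P. ?B j0 \<omega> = 1})"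
          by (rule Bochner_Integration.integral_cong[OF refl]) (use B01 in \<open>auto simp: indicator_def\<close>)
        also have "\<dots> = measure P {\<omega> \<in> space P. ?B j0 \<omega> = 1}"
          by (simp add: Int_absorb2)
        finally show ?thesis by simp
      qed
      also have "integral\<^sup>L P (?B j0) = integral\<^sup>L P (\<lambda>\<omega>. G \<omega> * indicator {\<alpha> (j0 - 1)..<\<alpha> j0} (G \<omega>)) / (g (\<alpha> j0) - g (\<alpha> (j0 - 1)))"
        using star[OF t j0(1)] .
      finally show ?thesis unfolding j0(2) by (simp add: j0_def)
    qed
    have "{\<omega> \<in> space P. nbreach F L Gtj m t \<omega> \<le> real (m + 1)} = space P"
    proof -
      have "nbreach F L Gtj m t \<omega> \<le> real (m+1)" for \<omega>
      proof -
        have "nbreach F L Gtj m t \<omega> \<le> of_nat (card {1..m+1}) * 1"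
          unfolding nbreach_def by (rule sum_bounded_above) (use Bnn in auto)
        then show ?thesis by simp
      qed
      then show ?thesis by auto
    qed
    then have "measure P {\<omega> \<in> space P. nbreach F L Gtj m t \<omega> \<le> real (m + 1)} = 1"
      using prob_space by simp
    with part_a show ?thesis by blast
  qed
  show ?thesis using part1 indep by blast
qed


end
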